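(* Let $H$ be a connected chordal graph on vertex set $\{v_1,\dots,v_n\}$ and let $v_1\prec\cdots\prec v_n$ be a perfect elimination ordering of $H$. For every $i\geq2$ such that $v_i$ has an outgoing neighbour, let $\nu(v_i)$ be the last (with respect to $\prec$) outgoing neighbour of $v_i$. Then the graph $T_\prec(H)$ on $V(H)$ whose edges are all pairs $\{v_i,\nu(v_i)\}$ is a spanning tree of $H$. Moreover, any ordering of $V(H)$ in which vertices farther from $v_1$ in $T_\prec(H)$ come later is a perfect elimination ordering of $H$.
   Context: A graph is chordal if it contains no induced cycle of length at least 4. An ordering $v_1\prec\cdots\prec v_n$ of the vertices of a graph $H$ is a perfect elimination ordering if for every $i$ the set of outgoing neighbours of $v_i$, i.e. neighbours of $v_i$ among $v_1,\dots,v_{i-1}$, induces a clique in $H$. *)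

theory Defs
  imports Main
begin

definition simple_graph :: "'a set \<Rightarrow> ('a \<Rightarrow> 'a \<Rightarrow> bool) \<Rightarrow> bool" where
  "simple_graph V E \<longleftrightarrow> finite V \<and> (\<forall>u v. E u v \<longrightarrow> u \<in> V \<and> v \<in> V)
     \<and> (\<forall>u v. E u v \<longrightarrow> E v u) \<and> (\<forall>u. \<not> E u u)"

definition connected_graph :: "'a set \<Rightarrow> ('a \<Rightarrow> 'a \<Rightarrow> bool) \<Rightarrow> bool" where
  "connected_graph V E \<longleftrightarrow> V \<noteq> {} \<and> (\<forall>u\<in>V. \<forall>v\<in>V. E\<^sup>*\<^sup>* u v)"

definition is_cycle :: "('a \<Rightarrow> 'a \<Rightarrow> bool) \<Rightarrow> 'a list \<Rightarrow> bool" where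
  "is_cycle E cs \<longleftrightarrow> length cs \<ge> 3 \<and> distinct cs
     \<and> (\<forall>i < length cs. E (cs ! i) (cs ! ((i + 1) mod length cs)))"

definition is_induced_cycle :: "('a \<Rightarrow> 'a \<Rightarrow> bool) \<Rightarrow> 'a list \<Rightarrow> bool" where
  "is_induced_cycle E cs \<longleftrightarrow> is_cycle E cs
     \<and> (\<forall>i < length cs. \<forall>j < length cs. E (cs ! i) (cs ! j) \<longrightarrow>
           j = (i + 1) mod length cs \<or> i = (j + 1) mod length cs)"

definition chordal :: "'a set \<Rightarrow> ('a \<Rightarrow> 'a \<Rightarrow> bool) \<Rightarrow> bool" where
  "chordal V E \<longleftrightarrow> (\<forall>cs. set cs \<subseteq> V \<and> length cs \<ge> 4 \<longrightarrow> \<not> is_induced_cycle E cs)"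

definition is_tree :: "'a set \<Rightarrow> ('a \<Rightarrow> 'a \<Rightarrow> bool) \<Rightarrow> bool" where
  "is_tree V T \<longleftrightarrow> connected_graph V T \<and> (\<forall>cs. \<not> is_cycle T cs)"

definition spanning_tree :: "'a set \<Rightarrow> ('a \<Rightarrow> 'a \<Rightarrow> bool) \<Rightarrow> ('a \<Rightarrow> 'a \<Rightarrow> bool) \<Rightarrow> bool" where
  "spanning_tree V E T \<longleftrightarrow> simple_graph V T \<and> (\<forall>u v. T u v \<longrightarrow> E u v) \<and> is_tree V T"

definition is_ordering :: "'a set \<Rightarrow> 'a list \<Rightarrow> bool" where
  "is_ordering V vs \<longleftrightarrow> distinct vs \<and> set vs = V"

definition peo :: "('a \<Rightarrow> 'a \<Rightarrow> bool) \<Rightarrow> 'a list \<Rightarrow> bool" where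
  "peo E vs \<longleftrightarrow> (\<forall>i < length vs. \<forall>j < i. \<forall>k < i.
      E (vs ! i) (vs ! j) \<and> E (vs ! i) (vs ! k) \<and> j \<noteq> k \<longrightarrow> E (vs ! j) (vs ! k))"

definition has_out_nbr :: "('a \<Rightarrow> 'a \<Rightarrow> bool) \<Rightarrow> 'a list \<Rightarrow> nat \<Rightarrow> bool" where
  "has_out_nbr E vs i \<longleftrightarrow> (\<exists>j < i. E (vs ! i) (vs ! j))"

definition nu :: "('a \<Rightarrow> 'a \<Rightarrow> bool) \<Rightarrow> 'a list \<Rightarrow> nat \<Rightarrow> 'a" where
  "nu E vs i = vs ! (GREATEST j. j < i \<and> E (vs ! i) (vs ! j))"

definition T_prec :: "('a \<Rightarrow> 'a \<Rightarrow> bool) \<Rightarrow> 'a list \<Rightarrow> 'a \<Rightarrow> 'a \<Rightarrow> bool" where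
  "T_prec E vs u v \<longleftrightarrow> (\<exists>i < length vs. has_out_nbr E vs i \<and>
      ((u = vs ! i \<and> v = nu E vs i) \<or> (v = vs ! i \<and> u = nu E vs i)))"

definition gdist :: "('a \<Rightarrow> 'a \<Rightarrow> bool) \<Rightarrow> 'a \<Rightarrow> 'a \<Rightarrow> nat" where
  "gdist E u v = (LEAST k. (E ^^ k) u v)"

end

theory Submission
  imports Defs
begin

locale PS =
  fixes V :: "'a set" and E :: "'a \<Rightarrow> 'a \<Rightarrow> bool" and vs :: "'a list"
  assumes sg: "simple_graph V E" and cg: "connected_graph V E"
    and ord: "is_ordering V vs" and pe: "peo E vs"
begin

lemma Esym: "E x y \<Longrightarrow> E y x" using sg unfolding simple_graph_def by blast
lemma Eirr: "\<not> E x x" using sg unfolding simple_graph_def by blast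
lemma EV: "E x y \<Longrightarrow> x \<in> V \<and> y \<in> V" using sg unfolding simple_graph_def by blast
lemma dist: "distinct vs" using ord unfolding is_ordering_def by blast
lemma setvs: "set vs = V" using ord unfolding is_ordering_def by blast
lemma nth_inj: "i < length vs \<Longrightarrow> j < length vs \<Longrightarrow> (vs!i = vs!j) = (i = j)"
  using nth_eq_iff_index_eq[OF dist] by blast
lemma peo': "i < length vs \<Longrightarrow> j < i \<Longrightarrow> k < i \<Longrightarrow> E (vs!i) (vs!j) \<Longrightarrow> E (vs!i) (vs!k)
   \<Longrightarrow> j \<noteq> k \<Longrightarrow> E (vs!j) (vs!k)"
  using pe unfolding peo_def by blast
lemma inV: "x \<in> V \<Longrightarrow> \<exists>a < length vs. x = vs!a"
  using setvs by (metis in_set_conv_nth)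
lemma nonempty: "0 < length vs"
  using cg setvs unfolding connected_graph_def by auto

definition S :: "nat \<Rightarrow> 'a set" where "S m = {vs!j | j. j < m}"
definition R :: "nat \<Rightarrow> 'a \<Rightarrow> 'a \<Rightarrow> bool" where "R m x y \<longleftrightarrow> E x y \<and> x \<in> S m \<and> y \<in> S m"

lemma S_Suc: "S (Suc m) = insert (vs!m) (S m)"
  unfolding S_def by (auto simp: less_Suc_eq)
lemma notinS: "m < length vs \<Longrightarrow> vs!m \<notin> S m"
  unfolding S_def using nth_inj by fastforce

lemma walk:
  assumes m: "m < length vs" and w: "(R (Suc m))\<^sup>*\<^sup>* x y" and x: "x \<in> S m"
  shows "(y \<in> S m \<and> (R m)\<^sup>*\<^sup>* x y) \<or> (y = vs!m \<and> (\<exists>c\<in>S m. (R m)\<^sup>*\<^sup>* x c \<and> E c (vs!m)))"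
  using w
proof (induction rule: rtranclp_induct)
  case base
  then show ?case using x by auto
next
  case (step b b')
  have Ebb: "E b b'" and bS: "b \<in> insert (vs!m) (S m)" and bS': "b' \<in> insert (vs!m) (S m)"
    using step.hyps(2) unfolding R_def S_Suc by auto
  show ?case
  proof (cases "b = vs!m")
    case True
    then obtain c where c: "c \<in> S m" "(R m)\<^sup>*\<^sup>* x c" "E c (vs!m)"
      using step.IH notinS[OF m] by auto
    have "b' \<noteq> vs!m" using Ebb True Eirr by auto
    then have b'S: "b' \<in> S m" using bS' by auto
    obtain j where j: "j < m" "c = vs!j" using c(1) unfolding S_def by auto
    obtain k where k: "k < m" "b' = vs!k" using b'S unfolding S_def by auto
    show ?thesis
    proof (cases "j = k")
      case True
      then show ?thesis using c j k b'S by auto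
    next
      case False
      have "E (vs!j) (vs!k)"
      proof -
        have "E (vs!m) (vs!j)" using Esym[OF c(3)] j by simp
        moreover have "E (vs!m) (vs!k)" using Ebb True k by simp
        ultimately show ?thesis using peo'[OF m j(1) k(1)] False by blast
      qed
      then have "R m c b'" unfolding R_def using j k c(1) b'S by auto
      then show ?thesis using c(2) b'S by (meson rtranclp.rtrancl_into_rtrancl)
    qed
  next
    case False
    then have bS2: "b \<in> S m" "(R m)\<^sup>*\<^sup>* x b" using step.IH by auto
    show ?thesis
    proof (cases "b' = vs!m")
      case True
      then show ?thesis using bS2 Ebb by auto
    next
      case False
      then have "b' \<in> S m" using bS' by auto
      then have "R m b b'" unfolding R_def using bS2 Ebb by auto
      then show ?thesis using bS2 \<open>b' \<in> S m\<close> by (meson rtranclp.rtrancl_into_rtrancl)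
    qed
  qed
qed

lemma S_full: "S (length vs) = V"
  unfolding S_def using setvs by (auto simp: in_set_conv_nth)

lemma conn:
  "1 \<le> m \<Longrightarrow> m \<le> length vs \<Longrightarrow> a < m \<Longrightarrow> (R m)\<^sup>*\<^sup>* (vs!0) (vs!a)"
proof (induction "length vs - m" arbitrary: m a)
  case 0
  then have mn: "m = length vs" by auto
  have "E\<^sup>*\<^sup>* (vs!0) (vs!a)"
    using cg 0 setvs unfolding connected_graph_def by (metis nth_mem mn le_less_trans less_le_trans zero_less_one)
  then show ?case
  proof (induction rule: rtranclp_induct)
    case base then show ?case by simp
  next
    case (step y z)
    then have "R m y z" unfolding R_def mn S_full using EV by auto
    then show ?case using step by (meson rtranclp.rtrancl_into_rtrancl)
  qed
next
  case (Suc d)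
  then have m: "m < length vs" by auto
  have "(R (Suc m))\<^sup>*\<^sup>* (vs!0) (vs!a)"
    using Suc.hyps(1)[of "Suc m" a] Suc.hyps(2) Suc.prems by auto
  moreover have "vs!0 \<in> S m" unfolding S_def using Suc.prems by auto
  moreover have "vs!a \<noteq> vs!m" using nth_inj Suc.prems m by auto
  ultimately show ?case using walk[OF m] by blast
qed

lemma has_out: "0 < i \<Longrightarrow> i < length vs \<Longrightarrow> \<exists>j<i. E (vs!i) (vs!j)"
proof -
  assume i: "0 < i" "i < length vs"
  have "(R (Suc i))\<^sup>*\<^sup>* (vs!0) (vs!i)" using conn[of "Suc i" i] i by auto
  moreover have "vs!0 \<in> S i" unfolding S_def using i by auto
  ultimately obtain c where "c \<in> S i" "E c (vs!i)" using walk[OF i(2)] notinS[OF i(2)] by blast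
  then show ?thesis unfolding S_def using Esym by blast
qed

definition par :: "nat \<Rightarrow> nat" where
  "par i = (if i = 0 then 0 else GREATEST j. j < i \<and> E (vs!i) (vs!j))"

lemma par:
  assumes "0 < i" "i < length vs"
  shows "par i < i" "E (vs!i) (vs!(par i))" "\<And>j. j < i \<Longrightarrow> E (vs!i) (vs!j) \<Longrightarrow> j \<le> par i"
proof -
  obtain k where k: "k < i" "E (vs!i) (vs!k)" using has_out assms by blast
  let ?P = "\<lambda>j. j < i \<and> E (vs!i) (vs!j)"
  have "?P (Greatest ?P)" by (rule GreatestI_nat[of ?P k i]) (use k in auto)
  then show "par i < i" "E (vs!i) (vs!(par i))" unfolding par_def using assms by auto
  fix j assume "j < i" "E (vs!i) (vs!j)"
  then show "j \<le> par i" unfolding par_def using assms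
    by (auto intro: Greatest_le_nat[of ?P j i])
qed

lemma nu_eq: "0 < i \<Longrightarrow> nu E vs i = vs ! par i"
  unfolding nu_def par_def by auto

lemma T_iff: "T_prec E vs u v \<longleftrightarrow> (\<exists>i. 0 < i \<and> i < length vs \<and>
   ((u = vs!i \<and> v = vs!par i) \<or> (v = vs!i \<and> u = vs!par i)))"
  unfolding T_prec_def has_out_nbr_def
  by (metis has_out less_nat_zero_code nu_eq neq0_conv)

lemma T_lower:
  assumes "a < length vs" "b < a" "T_prec E vs (vs!a) (vs!b) \<or> T_prec E vs (vs!b) (vs!a)"
  shows "b = par a"
proof -
  obtain i where i: "0 < i" "i < length vs"
     "(vs!a = vs!i \<and> vs!b = vs!par i) \<or> (vs!b = vs!i \<and> vs!a = vs!par i)"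
    using assms(3) unfolding T_iff by blast
  have pi: "par i < i" using par i by auto
  show ?thesis
  proof (cases "vs!a = vs!i \<and> vs!b = vs!par i")
    case True
    then show ?thesis using nth_inj assms i pi by auto
  next
    case False
    then have "b = i" "a = par i" using i nth_inj assms pi by auto
    then show ?thesis using pi assms by auto
  qed
qed

lemma TV:
  assumes "T_prec E vs u v" shows "u \<in> V \<and> v \<in> V"
proof -
  obtain i where i: "0 < i" "i < length vs"
    and d: "(u = vs!i \<and> v = vs!par i) \<or> (v = vs!i \<and> u = vs!par i)"
    using assms unfolding T_iff by blast
  have p: "par i < length vs" using par(1)[OF i] i(2) by linarith
  have "vs!i \<in> V" using nth_mem[OF i(2)] setvs by simp
  moreover have "vs!par i \<in> V" using nth_mem[OF p] setvs by simp
  ultimately show ?thesis using d by blast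
qed

lemma Tsym: "T_prec E vs u v \<Longrightarrow> T_prec E vs v u"
  unfolding T_iff by blast

lemma TE: "T_prec E vs u v \<Longrightarrow> E u v"
  unfolding T_iff using par(2) Esym by blast

lemma Tirr: "\<not> T_prec E vs u u"
  using TE Eirr by blast

definition idx :: "'a \<Rightarrow> nat" where "idx x = (THE a. a < length vs \<and> vs!a = x)"

lemma idx: "x \<in> V \<Longrightarrow> idx x < length vs \<and> vs!(idx x) = x"
proof -
  assume "x \<in> V"
  then obtain a where a: "a < length vs" "x = vs!a" using inV by blast
  have "idx x = a" unfolding idx_def
    by (rule the_equality) (use a nth_inj in auto)
  then show ?thesis using a by auto
qed

lemma nbr_par:
  assumes "y \<in> V" "idx y < a" "a < length vs" "T_prec E vs (vs!a) y \<or> T_prec E vs y (vs!a)"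
  shows "y = vs!(par a)"
proof -
  have "idx y = par a" using T_lower[of a "idx y"] assms idx[OF assms(1)] by auto
  then show ?thesis using idx[OF assms(1)] by auto
qed

lemma no_cycle: "\<not> is_cycle (T_prec E vs) cs"
proof
  assume c: "is_cycle (T_prec E vs) cs"
  define L where "L = length cs"
  have L3: "L \<ge> 3" and dcs: "distinct cs" and adj: "\<And>i. i < L \<Longrightarrow> T_prec E vs (cs!i) (cs!((i+1) mod L))"
    using c unfolding is_cycle_def L_def by auto
  have csV: "\<And>i. i < L \<Longrightarrow> cs!i \<in> V" using adj TV by blast
  have setV: "set cs \<subseteq> V" using csV L_def by (metis in_set_conv_nth subsetI)
  define m where "m = Max (idx ` set cs)"
  have ne: "set cs \<noteq> {}" using L3 L_def by auto
  have "m \<in> idx ` set cs" unfolding m_def using ne by (intro Max_in) auto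
  then obtain x where x: "x \<in> set cs" "idx x = m" by auto
  then obtain p where p: "p < L" "cs!p = x" unfolding L_def by (metis in_set_conv_nth)
  define a where "a = idx x"
  have xa: "a < length vs" "vs!a = x" using idx setV x(1) a_def by auto
  define s where "s = (if p = L - 1 then 0 else p + 1)"
  define r where "r = (if p = 0 then L - 1 else p - 1)"
  have s: "(p+1) mod L = s" "s < L" "s \<noteq> p" unfolding s_def using p L3 by auto
  have r: "(r+1) mod L = p" "r < L" "r \<noteq> p" "r \<noteq> s" unfolding r_def using p L3 s_def by auto
  have T1: "T_prec E vs x (cs!s)" using adj[OF p(1)] s p by auto
  have T2: "T_prec E vs (cs!r) x" using adj[OF r(2)] r p by auto
  have lt: "idx y < a" if "y \<in> set cs" "y \<noteq> x" for y
  proof -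
    have "idx y \<le> m" unfolding m_def using that by auto
    moreover have "idx y \<noteq> a" using idx[of y] that setV xa by auto
    ultimately show ?thesis using x a_def by auto
  qed
  have ns: "cs!s \<noteq> x" using nth_eq_iff_index_eq[OF dcs, of s p] s p L_def by auto
  have nr: "cs!r \<noteq> x" using nth_eq_iff_index_eq[OF dcs, of r p] r p L_def by auto
  have "cs!s = vs!(par a)"
    using nbr_par[of "cs!s" a] T1 xa csV[OF s(2)] lt[of "cs!s"] ns s(2) L_def by auto
  moreover have "cs!r = vs!(par a)"
    using nbr_par[of "cs!r" a] T2 xa csV[OF r(2)] lt[of "cs!r"] nr r(2) L_def by auto
  ultimately show False using nth_eq_iff_index_eq[OF dcs, of s r] r s L_def by auto
qed

lemma Troot: "i < length vs \<Longrightarrow> (T_prec E vs)\<^sup>*\<^sup>* (vs!0) (vs!i)"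
proof (induction i rule: less_induct)
  case (less i)
  show ?case
  proof (cases "i = 0")
    case True then show ?thesis by simp
  next
    case False
    then have "T_prec E vs (vs!par i) (vs!i)" unfolding T_iff using less.prems False by blast
    moreover have "(T_prec E vs)\<^sup>*\<^sup>* (vs!0) (vs!par i)"
      using less.IH par(1) False less.prems by auto
    ultimately show ?thesis by (meson rtranclp.rtrancl_into_rtrancl)
  qed
qed

lemma Tconv: "(T_prec E vs)\<^sup>*\<^sup>* x y \<Longrightarrow> (T_prec E vs)\<^sup>*\<^sup>* y x"
proof (induction rule: rtranclp_induct)
  case base then show ?case by simp
next
  case (step y z)
  show ?case by (rule converse_rtranclp_into_rtranclp[OF Tsym[OF step.hyps(2)] step.IH])
qed

lemma spanning: "spanning_tree V E (T_prec E vs)"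
proof -
  have "finite V" using sg unfolding simple_graph_def by auto
  then have sg2: "simple_graph V (T_prec E vs)"
    unfolding simple_graph_def using TV Tsym Tirr by blast
  have "connected_graph V (T_prec E vs)"
    unfolding connected_graph_def
  proof (intro conjI ballI)
    show "V \<noteq> {}" using cg unfolding connected_graph_def by auto
    fix u v assume "u \<in> V" "v \<in> V"
    then obtain a b where ab: "a < length vs" "u = vs!a" "b < length vs" "v = vs!b" using inV by blast
    have "(T_prec E vs)\<^sup>*\<^sup>* (vs!a) (vs!0)" by (rule Tconv[OF Troot[OF ab(1)]])
    moreover have "(T_prec E vs)\<^sup>*\<^sup>* (vs!0) (vs!b)" by (rule Troot[OF ab(3)])
    ultimately show "(T_prec E vs)\<^sup>*\<^sup>* u v" using ab(2,4) rtranclp_trans[of "T_prec E vs" "vs!a" "vs!0" "vs!b"] by simp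
  qed
  then show ?thesis unfolding spanning_tree_def is_tree_def using sg2 TE no_cycle by blast
qed

function dep :: "nat \<Rightarrow> nat" where
  "dep i = (if i = 0 then 0 else if par i < i then Suc (dep (par i)) else 0)"
  by auto
termination by (relation "measure id") auto

declare dep.simps[simp del]

lemma dep0: "dep 0 = 0" by (subst dep.simps) simp

lemma dep_par: "0 < i \<Longrightarrow> i < length vs \<Longrightarrow> dep i = Suc (dep (par i))"
  by (subst dep.simps) (use par(1) in auto)

lemma anc: "a < length vs \<Longrightarrow> b < a \<Longrightarrow> E (vs!a) (vs!b) \<Longrightarrow> dep b < dep a"
proof (induction a arbitrary: b rule: less_induct)
  case (less a)
  have a0: "0 < a" using less by auto
  have pa: "par a < a" "E (vs!a) (vs!par a)" "b \<le> par a" using par[OF a0 less.prems(1)] less.prems by auto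
  show ?case
  proof (cases "b = par a")
    case True then show ?thesis using dep_par a0 less.prems by auto
  next
    case False
    then have "b < par a" using pa by auto
    moreover have "E (vs!par a) (vs!b)" using peo'[OF less.prems(1) pa(1) less.prems(2) pa(2) less.prems(3)] False by auto
    ultimately have "dep b < dep (par a)" using less.IH[OF pa(1)] pa less.prems by auto
    then show ?thesis using dep_par a0 less.prems by auto
  qed
qed

lemma reach: "i < length vs \<Longrightarrow> ((T_prec E vs) ^^ dep i) (vs!0) (vs!i)"
proof (induction i rule: less_induct)
  case (less i)
  show ?case
  proof (cases "i = 0")
    case True then show ?thesis using dep0 by simp
  next
    case False
    have h2: "T_prec E vs (vs!par i) (vs!i)" unfolding T_iff using less.prems False by blast
    have h1: "((T_prec E vs) ^^ dep (par i)) (vs!0) (vs!par i)"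
      using less.IH par(1) False less.prems by auto
    have "((T_prec E vs) ^^ Suc (dep (par i))) (vs!0) (vs!i)"
      by (rule relpowp_Suc_I[OF h1 h2])
    then show ?thesis using dep_par False less.prems by simp
  qed
qed

lemma reach_lb: "((T_prec E vs) ^^ k) (vs!0) y \<Longrightarrow> \<exists>j<length vs. y = vs!j \<and> dep j \<le> k"
proof (induction k arbitrary: y)
  case 0
  then show ?case using nonempty dep0 by auto
next
  case (Suc k)
  then obtain z where z: "((T_prec E vs) ^^ k) (vs!0) z" "T_prec E vs z y" by (meson relpowp_Suc_E)
  then obtain j where j: "j < length vs" "z = vs!j" "dep j \<le> k" using Suc.IH by blast
  obtain i where i: "0 < i" "i < length vs" "(z = vs!i \<and> y = vs!par i) \<or> (y = vs!i \<and> z = vs!par i)"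
    using z(2) unfolding T_iff by blast
  have pi: "par i < i" using par i by auto
  show ?case
  proof (cases "z = vs!i \<and> y = vs!par i")
    case True
    then have "i = j" using nth_inj j i by auto
    then show ?thesis using True dep_par i j pi by (intro exI[of _ "par i"]) auto
  next
    case False
    then have "par i = j" using i j nth_inj pi by auto
    then show ?thesis using False i dep_par j by (intro exI[of _ i]) auto
  qed
qed

lemma gd: "i < length vs \<Longrightarrow> gdist (T_prec E vs) (vs!0) (vs!i) = dep i"
  unfolding gdist_def
proof (rule Least_equality)
  assume "i < length vs"
  then show "(T_prec E vs ^^ dep i) (vs ! 0) (vs ! i)" using reach by auto
  fix k assume "(T_prec E vs ^^ k) (vs ! 0) (vs ! i)"
  then obtain j where "j < length vs" "vs!i = vs!j" "dep j \<le> k" using reach_lb by blast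
  then show "dep i \<le> k" using nth_inj \<open>i < length vs\<close> by auto
qed

lemma part2:
  assumes ws: "is_ordering V ws"
    and h: "\<forall>i < length ws. \<forall>j < length ws.
              gdist (T_prec E vs) (vs ! 0) (ws ! i) < gdist (T_prec E vs) (vs ! 0) (ws ! j) \<longrightarrow> i < j"
  shows "peo E ws"
  unfolding peo_def
proof (intro allI impI)
  fix i j k
  assume a: "i < length ws" "j < i" "k < i"
    and e: "E (ws ! i) (ws ! j) \<and> E (ws ! i) (ws ! k) \<and> j \<noteq> k"
  have dws: "distinct ws" "set ws = V" using ws unfolding is_ordering_def by auto
  have inw: "ws!x \<in> V" if "x < length ws" for x using that dws by auto
  obtain ia where ia: "ia < length vs" "ws!i = vs!ia" using inV inw a by blast
  have key: "\<exists>b. b < ia \<and> ws!j' = vs!b" if j': "j' < i" "E (ws!i) (ws!j')" for j'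
  proof -
    have jl: "j' < length ws" using a j' by auto
    obtain b where b: "b < length vs" "ws!j' = vs!b" using inV[OF inw[OF jl]] by blast
    have "\<not> gdist (T_prec E vs) (vs ! 0) (ws ! i) < gdist (T_prec E vs) (vs ! 0) (ws ! j')"
    proof
      assume "gdist (T_prec E vs) (vs ! 0) (ws ! i) < gdist (T_prec E vs) (vs ! 0) (ws ! j')"
      moreover have "gdist (T_prec E vs) (vs ! 0) (ws ! i) < gdist (T_prec E vs) (vs ! 0) (ws ! j') \<longrightarrow> i < j'"
        using h a(1) jl by blast
      ultimately show False using j'(1) by simp
    qed
    then have "\<not> dep ia < dep b" using gd ia b by auto
    moreover have "b \<noteq> ia" using Eirr j' ia b by auto
    moreover have "\<not> ia < b \<or> dep ia < dep b"
    proof -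
      have "E (vs!ia) (vs!b)" using j'(2) ia b by simp
      then show ?thesis using anc[of b ia] Esym[of "vs!ia" "vs!b"] b(1) by blast
    qed
    ultimately have "b < ia" by auto
    then show ?thesis using b by blast
  qed
  obtain b where b: "b < ia" "ws!j = vs!b" using key a e by blast
  obtain c where c: "c < ia" "ws!k = vs!c" using key a e by blast
  have "b \<noteq> c" using e b c nth_eq_iff_index_eq[OF dws(1), of j k] a by auto
  then show "E (ws ! j) (ws ! k)" using peo'[OF ia(1) b(1) c(1)] e ia b c by auto
qed

end

theorem mainTheorem6:
  fixes V :: "'a set" and E :: "'a \<Rightarrow> 'a \<Rightarrow> bool" and vs :: "'a list"
  assumes "simple_graph V E"
    and "connected_graph V E"
    and "chordal V E"
    and "is_ordering V vs"
    and "peo E vs"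
  shows "spanning_tree V E (T_prec E vs)
    \<and> (\<forall>ws. is_ordering V ws \<and>
          (\<forall>i < length ws. \<forall>j < length ws.
              gdist (T_prec E vs) (vs ! 0) (ws ! i) < gdist (T_prec E vs) (vs ! 0) (ws ! j) \<longrightarrow> i < j)
          \<longrightarrow> peo E ws)"
proof -
  interpret PS V E vs using assms by (unfold_locales) auto
  show ?thesis
  proof (intro conjI allI impI)
    show "spanning_tree V E (T_prec E vs)" by (rule spanning)
  next
    fix ws
    assume H: "is_ordering V ws \<and>
          (\<forall>i < length ws. \<forall>j < length ws.
              gdist (T_prec E vs) (vs ! 0) (ws ! i) < gdist (T_prec E vs) (vs ! 0) (ws ! j) \<longrightarrow> i < j)"
    show "peo E ws" by (rule part2[OF conjunct1[OF H] conjunct2[OF H]])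
  qed
qed

end
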